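(* Let $p \geq 3$ and $q \geq 2$ be integers and let $L$ be the Laplacian of the graph $K_p \oplus C_q$. Then the spectrum of $L$ consists of the eigenvalue $p$ with multiplicity $p-2$, a simple eigenvalue $\lambda \in (p,p+2]$, and $q$ eigenvalues (counted with multiplicity) in the interval $[0,4]$, which include the simple eigenvalue $0$.
   Context: For integers $p \geq 3$, $q \geq 2$, the graph $K_p \oplus C_q$ has vertex set $\{-p+1,\ldots,0\} \cup \{1,\ldots,q-1\}$ (so $p+q-1$ vertices). Its edges are: every pair of distinct vertices in $\{-p+1,\ldots,0\}$, the edge $\{0,1\}$, and the edges $\{j,j+1\}$ for $1 \leq j \leq q-2$. The Laplacian $L$ is the matrix with $L_{ii}$ equal to the degree of vertex $i$, $L_{ij}=-1$ if $i\neq j$ are adjacent and $0$ otherwise. *)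

theory Defs
  imports "Jordan_Normal_Form.Char_Poly" "HOL-Library.Multiset"
begin

definition KC_vertices :: "nat \<Rightarrow> nat \<Rightarrow> int set" where
  "KC_vertices p q = {- int p + 1 .. int q - 1}"

definition KC_adj :: "nat \<Rightarrow> nat \<Rightarrow> int \<Rightarrow> int \<Rightarrow> bool" where
  "KC_adj p q u v \<longleftrightarrow> u \<in> KC_vertices p q \<and> v \<in> KC_vertices p q \<and> u \<noteq> v \<and>
     ((u \<le> 0 \<and> v \<le> 0) \<or> {u, v} = {0, 1} \<or>
      (\<exists>j. 1 \<le> j \<and> j \<le> int q - 2 \<and> {u, v} = {j, j + 1}))"

definition KC_degree :: "nat \<Rightarrow> nat \<Rightarrow> int \<Rightarrow> nat" where
  "KC_degree p q u = card {v \<in> KC_vertices p q. KC_adj p q u v}"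

definition KC_laplacian :: "nat \<Rightarrow> nat \<Rightarrow> real mat" where
  "KC_laplacian p q = mat (p + q - 1) (p + q - 1) (\<lambda>(i, j).
     let u = int i - int p + 1; v = int j - int p + 1 in
     if i = j then real (KC_degree p q u)
     else if KC_adj p q u v then -1 else 0)"

text \<open>E is the spectrum of A counted with (algebraic) multiplicity:
  the characteristic polynomial splits as the product of (x - a) over a in E.\<close>
definition spectrum_mset :: "real mat \<Rightarrow> real multiset \<Rightarrow> bool" where
  "spectrum_mset A E \<longleftrightarrow> char_poly A = (\<Prod>a\<in>#E. [:- a, 1:])"

end

theory Submission
  imports Defs Complex_Main
begin

fun bb :: "real \<Rightarrow> real \<Rightarrow> nat \<Rightarrow> real" where
  "bb P r 0 = 1 + (P - 2) * r"
| "bb P r (Suc 0) = 1 - r"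
| "bb P r (Suc (Suc m)) = (2 - r) * bb P r (Suc m) - bb P r m"

definition hh :: "real \<Rightarrow> nat \<Rightarrow> real \<Rightarrow> real" where
  "hh P q r = bb P r (Suc q) - bb P r q"

lemma bb_zero: "bb P 0 m = 1"
  by (induction P "0::real" m rule: bb.induct) auto

lemma hh_zero: "hh P q 0 = 0"
  by (simp add: hh_def bb_zero)

lemma bb_cont: "continuous_on S (\<lambda>r. bb P r m)"
  by (induction P "r::real" m rule: bb.induct) (auto intro!: continuous_intros)

lemma hh_cont: "continuous_on S (hh P q)"
  unfolding hh_def by (intro continuous_intros bb_cont)
lemma cos_pm: "cos ((x::real) + y) = 2 * cos y * cos x - cos (x - y)"
  by (simp add: cos_add cos_diff)
lemma sin_pm: "sin ((x::real) + y) = 2 * cos y * sin x - sin (x - y)"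
  by (simp add: sin_add sin_diff)

lemma bb_closed:
  fixes P s :: real
  defines "A \<equiv> 1 + (P - 3) * (1 - cos (2*s))"
  defines "B \<equiv> - (P - 1) * sin (2*s)"
  shows "cos s * bb P (2 - 2 * cos (2*s)) m
     = A * cos ((2 * real m - 1) * s) + B * sin ((2 * real m - 1) * s)"
proof (induction m rule: nat_less_induct)
  case (1 n)
  show ?case
  proof (cases n)
    case 0
    show ?thesis using 0 unfolding A_def B_def cos_double_sin sin_double
      by (simp add: algebra_simps power2_eq_square)
  next
    case (Suc k) then show ?thesis
    proof (cases k)
      case 0
      show ?thesis using 0 Suc unfolding A_def B_def cos_double_sin sin_double
        by (simp add: algebra_simps power2_eq_square)
    next
      case (Suc j)
      have IH1: "cos s * bb P (2 - 2 * cos (2*s)) (Suc j)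
         = A * cos ((2 * real (Suc j) - 1) * s) + B * sin ((2 * real (Suc j) - 1) * s)"
        using 1 \<open>n = Suc k\<close> Suc by auto
      have IH0: "cos s * bb P (2 - 2 * cos (2*s)) j
         = A * cos ((2 * real j - 1) * s) + B * sin ((2 * real j - 1) * s)"
        using 1 \<open>n = Suc k\<close> Suc by auto
      let ?x = "(2 * real (Suc j) - 1) * s"
      have e1: "(2 * real (Suc (Suc j)) - 1) * s = ?x + 2*s" by (simp add: algebra_simps)
      have e0: "(2 * real j - 1) * s = ?x - 2*s" by (simp add: algebra_simps)
      have "cos s * bb P (2 - 2 * cos (2*s)) n
          = 2 * cos (2*s) * (cos s * bb P (2 - 2 * cos (2*s)) (Suc j)) - cos s * bb P (2 - 2 * cos (2*s)) j"
        using \<open>n = Suc k\<close> Suc by (simp add: algebra_simps)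
      also have "\<dots> = A * cos (?x + 2*s) + B * sin (?x + 2*s)"
        unfolding IH1 IH0 e0 cos_pm[of ?x "2*s"] sin_pm[of ?x "2*s"] by (simp add: algebra_simps)
      finally show ?thesis using e1 \<open>n = Suc k\<close> Suc by simp
    qed
  qed
qed
lemma hh_closed:
  fixes P s :: real
  shows "cos s * hh P q (2 - 2 * cos (2*s))
     = 2 * sin s * (- (P - 1) * sin (2*s) * cos (2 * real q * s)
                    - (1 + (P - 3) * (1 - cos (2*s))) * sin (2 * real q * s))"
proof -
  let ?x = "2 * real q * s"
  have e1: "(2 * real (Suc q) - 1) * s = ?x + s" by (simp add: algebra_simps)
  have e0: "(2 * real q - 1) * s = ?x - s" by (simp add: algebra_simps)
  have "cos s * hh P q (2 - 2 * cos (2*s)) = cos s * bb P (2 - 2 * cos (2*s)) (Suc q) - cos s * bb P (2 - 2 * cos (2*s)) q"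
    by (simp add: hh_def algebra_simps)
  also have "\<dots> = (1 + (P - 3) * (1 - cos (2*s))) * (cos (?x + s) - cos (?x - s))
      + (- (P - 1) * sin (2*s)) * (sin (?x + s) - sin (?x - s))"
    unfolding bb_closed e1 e0 by (simp add: algebra_simps)
  also have "\<dots> = 2 * sin s * (- (P - 1) * sin (2*s) * cos ?x
                    - (1 + (P - 3) * (1 - cos (2*s))) * sin ?x)"
    by (simp add: cos_add cos_diff sin_add sin_diff algebra_simps)
  finally show ?thesis .
qed

lemma hh_node_sign:
  fixes P :: real
  assumes P: "P \<ge> 3" and j: "1 \<le> j" "j < q"
  shows "(-1)^j * hh P q (2 - 2 * cos (2 * (real j * pi / (2 * real q)))) < 0"
proof -
  let ?s = "real j * pi / (2 * real q)"
  have q0: "real q > 0" using j by simp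
  have s0: "0 < ?s" using j q0 by simp
  have sl: "?s < pi / 2"
  proof -
    have "real j < real q" using j by simp
    then have "real j * pi < real q * pi" by simp
    then show ?thesis using q0 by (simp add: field_simps)
  qed
  have cs: "cos ?s > 0" using s0 sl by (intro cos_gt_zero) auto
  have ss: "sin ?s > 0" using s0 sl pi_gt_zero by (intro sin_gt_zero) linarith+
  have s2': "2 * ?s < pi" using sl by linarith
  have s2: "sin (2 * ?s) > 0" by (rule sin_gt_zero) (use s0 s2' in linarith)+
  have x: "2 * real q * ?s = real j * pi" using q0 by (simp add: field_simps)
  have "cos ?s * hh P q (2 - 2 * cos (2 * ?s)) = 2 * sin ?s * (- (P - 1) * sin (2 * ?s) * (-1)^j)"
    unfolding hh_closed x by simp
  then have "cos ?s * ((-1)^j * hh P q (2 - 2 * cos (2 * ?s))) = (-1)^j * (2 * sin ?s * (- (P - 1) * sin (2 * ?s) * (-1)^j))"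
    by (metis mult.left_commute)
  also have "\<dots> = - (2 * sin ?s * (P - 1) * sin (2 * ?s)) * ((-1)^j * (-1)^j)"
    by (simp add: algebra_simps)
  also have "(-1::real)^j * (-1)^j = 1" by (simp add: power_mult_distrib[symmetric])
  finally have "cos ?s * ((-1)^j * hh P q (2 - 2 * cos (2 * ?s))) = - (2 * sin ?s * (P - 1) * sin (2 * ?s))" by simp
  moreover have "2 * sin ?s * (P - 1) * sin (2 * ?s) > 0" using ss s2 P by simp
  ultimately have "cos ?s * ((-1)^j * hh P q (2 - 2 * cos (2 * ?s))) < 0" by linarith
  then show ?thesis using cs by (simp add: mult_less_0_iff)
qed

lemma hh_quarter_sign:
  fixes P :: real
  assumes P: "P \<ge> 3" and q: "1 \<le> q"
  shows "hh P q (2 - 2 * cos (2 * (pi / (4 * real q)))) < 0"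
proof -
  let ?s = "pi / (4 * real q)"
  have q0: "real q \<ge> 1" using q by simp
  have s0: "0 < ?s" using q0 by simp
  have sl: "?s < pi / 2" using q0 by (simp add: field_simps)
  have cs: "cos ?s > 0" using s0 sl by (intro cos_gt_zero) auto
  have ss: "sin ?s > 0" using s0 sl pi_gt_zero by (intro sin_gt_zero) linarith+
  have x: "2 * real q * ?s = pi / 2" using q0 by (simp add: field_simps)
  have A: "1 + (P - 3) * (1 - cos (2 * ?s)) > 0"
  proof -
    have "1 - cos (2 * ?s) \<ge> 0" by simp
    then have "(P - 3) * (1 - cos (2 * ?s)) \<ge> 0" using P by simp
    then show ?thesis by linarith
  qed
  have "cos ?s * hh P q (2 - 2 * cos (2 * ?s)) = - (2 * sin ?s * (1 + (P - 3) * (1 - cos (2 * ?s))))"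
    unfolding hh_closed x by (simp add: algebra_simps)
  moreover have "2 * sin ?s * (1 + (P - 3) * (1 - cos (2 * ?s))) > 0" using ss A by simp
  ultimately have "cos ?s * hh P q (2 - 2 * cos (2 * ?s)) < 0" by linarith
  then show ?thesis using cs by (simp add: mult_less_0_iff)
qed
lemma seq_grow:
  fixes d :: "nat \<Rightarrow> real"
  assumes K: "K \<ge> 2" and rec: "\<And>m. d (Suc (Suc m)) = K * d (Suc m) - d m"
    and d0: "0 < d n" and d1: "d n \<le> d (Suc n)"
  shows "0 < d (n + j) \<and> d (n + j) \<le> d (Suc (n + j))"
proof (induction j)
  case 0 then show ?case using d0 d1 by simp
next
  case (Suc j)
  have "d (Suc (Suc (n + j))) = K * d (Suc (n + j)) - d (n + j)" by (rule rec)
  moreover have "K * d (Suc (n + j)) \<ge> 2 * d (Suc (n + j))"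
    using K Suc by (intro mult_right_mono) auto
  ultimately have "d (Suc (n + j)) \<le> d (Suc (Suc (n + j)))" using Suc by linarith
  moreover have "0 < d (Suc (n + j))" using Suc by linarith
  ultimately show ?case by simp
qed

lemma bb_alt_rec:
  "(-1)^(Suc (Suc m) + 1) * bb P r (Suc (Suc m))
     = (r - 2) * ((-1)^(Suc m + 1) * bb P r (Suc m)) - (-1)^(m+1) * bb P r m"
  by (simp add: algebra_simps)

lemma hh_alt: "hh P q r = (-1)^q * ((-1)^(Suc q + 1) * bb P r (Suc q) + (-1)^(q+1) * bb P r q)"
  by (simp add: hh_def algebra_simps)

lemma hh_Pplus1:
  fixes P :: real assumes P: "P \<ge> 3" and q: "q \<ge> 2"
  shows "(-1)^q * hh P q (P + 1) \<ge> 0"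
proof -
  define d where "d m = (-1)^(m+1) * bb P (P + 1) m" for m
  have rec: "\<And>m. d (Suc (Suc m)) = (P - 1) * d (Suc m) - d m"
    unfolding d_def using bb_alt_rec[of _ P "P+1"] by (simp add: algebra_simps)
  have d2: "d 2 = -1" unfolding d_def by (simp add: numeral_eq_Suc algebra_simps)
  have d3: "d 3 = 1" unfolding d_def by (simp add: numeral_eq_Suc algebra_simps)
  have d4: "d 4 = P" using rec[of 2] d2 d3 by (simp add: numeral_eq_Suc algebra_simps)
  have hq: "(-1)^q * hh P q (P + 1) = d (Suc q) + d q"
    unfolding hh_alt d_def by (simp add: power_mult_distrib[symmetric] algebra_simps)
  show ?thesis
  proof (cases "q = 2")
    case True then show ?thesis using hq d2 d3 by (simp add: numeral_eq_Suc)
  next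
    case False
    then have q3: "q \<ge> 3" using q by simp
    have "0 < d (3 + (q - 3)) \<and> d (3 + (q - 3)) \<le> d (Suc (3 + (q - 3)))"
      by (rule seq_grow[of "P - 1"]) (use P rec d3 d4 in \<open>auto simp: numeral_eq_Suc\<close>)
    then show ?thesis using hq q3 by simp
  qed
qed

lemma hh_Pplus2:
  fixes P :: real assumes P: "P \<ge> 3" and q: "q \<ge> 2"
  shows "(-1)^q * hh P q (P + 2) < 0"
proof -
  define d where "d m = - ((-1)^(m+1) * bb P (P + 2) m)" for m
  have rec: "\<And>m. d (Suc (Suc m)) = P * d (Suc m) - d m"
    unfolding d_def using bb_alt_rec[of _ P "P+2"] by (simp add: algebra_simps)
  have d1: "d 1 = P + 1" unfolding d_def by (simp add: algebra_simps)
  have d2: "d 2 = P + 3" unfolding d_def by (simp add: numeral_eq_Suc algebra_simps power2_eq_square)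
  have hq: "(-1)^q * hh P q (P + 2) = - (d (Suc q) + d q)"
    unfolding hh_alt d_def by (simp add: power_mult_distrib[symmetric] algebra_simps)
  have "0 < d (1 + (q - 1)) \<and> d (1 + (q - 1)) \<le> d (Suc (1 + (q - 1)))"
    by (rule seq_grow[of P]) (use P rec d1 d2 in \<open>auto simp: numeral_eq_Suc\<close>)
  then show ?thesis using hq q by simp
qed

lemma big_root:
  fixes P :: real assumes P: "P \<ge> 3" and q: "q \<ge> 2"
  shows "\<exists>lam. P + 1 \<le> lam \<and> lam \<le> P + 2 \<and> hh P q lam = 0"
proof -
  have a: "(-1)^q * hh P q (P + 1) \<ge> 0" using hh_Pplus1[OF P q] .
  have b: "(-1)^q * hh P q (P + 2) < 0" using hh_Pplus2[OF P q] .
  have c: "continuous_on {P+1..P+2} (hh P q)" by (rule hh_cont)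
  consider "even q" | "odd q" by blast
  then show ?thesis
  proof cases
    case 1
    then have "hh P q (P + 2) \<le> 0" "0 \<le> hh P q (P + 1)" using a b by auto
    from IVT2'[of "hh P q", OF this _ c] show ?thesis by auto
  next
    case 2
    then have "hh P q (P + 1) \<le> 0" "0 \<le> hh P q (P + 2)" using a b by auto
    from IVT'[of "hh P q", OF this _ c] show ?thesis by auto
  qed
qed
lemma ivt_strict:
  fixes f :: "real \<Rightarrow> real"
  assumes ab: "a < b" and c: "continuous_on {a..b} f" and s: "f a * f b < 0"
  shows "\<exists>x. a < x \<and> x < b \<and> f x = 0"
proof -
  have "\<exists>x. a \<le> x \<and> x \<le> b \<and> f x = 0"
  proof (cases "f a < 0")
    case True
    then have "f b > 0" using s by (simp add: mult_less_0_iff)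
    then show ?thesis using IVT'[of f a 0 b, OF _ _ _ c] True ab by auto
  next
    case False
    then have "f a > 0" "f b < 0" using s by (auto simp add: mult_less_0_iff)
    then show ?thesis using IVT2'[of f b 0 a, OF _ _ _ c] ab by auto
  qed
  then obtain x where "a \<le> x" "x \<le> b" "f x = 0" by blast
  moreover have "x \<noteq> a" "x \<noteq> b" using s \<open>f x = 0\<close> by auto
  ultimately show ?thesis by force
qed

definition GG :: "real \<Rightarrow> nat \<Rightarrow> real \<Rightarrow> real" where
  "GG P q s = hh P q (2 - 2 * cos (2 * s))"

lemma GG_cont: "continuous_on S (GG P q)"
proof -
  have "continuous_on S (hh P q \<circ> (\<lambda>s. 2 - 2 * cos (2 * s)))"
    by (intro continuous_on_compose continuous_intros hh_cont)
  then show ?thesis by (simp add: GG_def o_def)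
qed

definition lo :: "nat \<Rightarrow> nat \<Rightarrow> real" where
  "lo q k = (if k = 1 then pi / (4 * real q) else real (k - 1) * pi / (2 * real q))"
definition hi :: "nat \<Rightarrow> nat \<Rightarrow> real" where
  "hi q k = real k * pi / (2 * real q)"

lemma lo_hi: assumes "1 \<le> k" "k < q" shows "0 < lo q k" "lo q k < hi q k" "hi q k < pi / 2"
  "hi q k \<le> lo q (Suc k)"
proof -
  have q0: "real q > 0" using assms by simp
  show "0 < lo q k" using assms q0 by (simp add: lo_def)
  show "lo q k < hi q k"
  proof (cases "k = 1")
    case True then show ?thesis using q0 by (simp add: lo_def hi_def field_simps)
  next
    case False
    then have "real (k - 1) < real k" using assms by simp
    then have "real (k - 1) * pi < real k * pi" by simp
    then show ?thesis using False q0 by (simp add: lo_def hi_def divide_strict_right_mono)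
  qed
  show "hi q k < pi / 2"
  proof -
    have "real k * pi < real q * pi" using assms by simp
    then show ?thesis using q0 by (simp add: hi_def field_simps)
  qed
  show "hi q k \<le> lo q (Suc k)" using assms by (simp add: lo_def hi_def)
qed

lemma GG_interval_sign:
  fixes P :: real
  assumes P: "P \<ge> 3" and k: "1 \<le> k" "k < q"
  shows "GG P q (lo q k) * GG P q (hi q k) < 0"
proof -
  have hiS: "(-1)^k * GG P q (hi q k) < 0"
    using hh_node_sign[OF P k] by (simp add: GG_def hi_def)
  show ?thesis
  proof (cases "k = 1")
    case True
    have "GG P q (lo q k) < 0" using hh_quarter_sign[OF P, of q] k True by (simp add: GG_def lo_def)
    moreover have "GG P q (hi q k) > 0" using hiS True by simp
    ultimately show ?thesis by (simp add: mult_neg_pos)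
  next
    case False
    then obtain m where m: "k = Suc m" "1 \<le> m" "m < q" using k by (cases k) auto
    have loS: "(-1)^m * GG P q (lo q k) < 0"
      using hh_node_sign[OF P m(2,3)] False m by (simp add: GG_def lo_def)
    have "((-1)^m * GG P q (lo q k)) * ((-1)^k * GG P q (hi q k)) > 0"
      using loS hiS by (simp add: mult_neg_neg)
    moreover have "((-1)^m * GG P q (lo q k)) * ((-1)^k * GG P q (hi q k))
        = - (((-1::real)^m * (-1)^m) * (GG P q (lo q k) * GG P q (hi q k)))"
      using m by (simp add: algebra_simps)
    moreover have "(-1::real)^m * (-1)^m = 1" by (simp add: power_mult_distrib[symmetric])
    ultimately show ?thesis by simp
  qed
qed

lemma small_roots:
  fixes P :: real
  assumes P: "P \<ge> 3" and q: "q \<ge> 2"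
  shows "\<exists>rt :: nat \<Rightarrow> real. rt 0 = 0 \<and> (\<forall>k<q. hh P q (rt k) = 0 \<and> 0 \<le> rt k \<and> rt k < 4)
      \<and> (\<forall>i j. i < j \<longrightarrow> j < q \<longrightarrow> rt i < rt j)"
proof -
  have "\<forall>k. \<exists>s. 1 \<le> k \<longrightarrow> k < q \<longrightarrow> lo q k < s \<and> s < hi q k \<and> GG P q s = 0"
  proof (intro allI impI)
    fix k
    show "\<exists>s. 1 \<le> k \<longrightarrow> k < q \<longrightarrow> lo q k < s \<and> s < hi q k \<and> GG P q s = 0"
    proof (cases "1 \<le> k \<and> k < q")
      case True
      then have "\<exists>x. lo q k < x \<and> x < hi q k \<and> GG P q x = 0"
        using lo_hi GG_interval_sign[OF P] GG_cont by (intro ivt_strict) auto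
      then show ?thesis by blast
    qed auto
  qed
  then obtain sr where sr: "\<And>k. 1 \<le> k \<Longrightarrow> k < q \<Longrightarrow> lo q k < sr k \<and> sr k < hi q k \<and> GG P q (sr k) = 0"
    by metis
  define rt where "rt k = (if k = 0 then 0 else 2 - 2 * cos (2 * sr k))" for k
  have srb: "0 < 2 * sr k" "2 * sr k < pi" if "1 \<le> k" "k < q" for k
    using sr[OF that] lo_hi[OF that] by auto
  have srm: "sr i < sr j" if "1 \<le> i" "i < j" "j < q" for i j
  proof -
    have "sr i < hi q i" using sr that by auto
    also have "hi q i \<le> hi q (j - 1)" using that by (simp add: hi_def divide_right_mono)
    also have "hi q (j - 1) \<le> lo q j" using lo_hi(4)[of "j - 1" q] that by simp
    also have "lo q j < sr j" using sr that by auto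
    finally show ?thesis .
  qed
  show ?thesis
  proof (intro exI conjI allI impI)
    show "rt 0 = 0" by (simp add: rt_def)
  next
    fix k assume k: "k < q"
    show "hh P q (rt k) = 0"
      using sr[of k] k by (cases "k = 0") (auto simp: rt_def hh_zero GG_def)
    show "0 \<le> rt k" by (simp add: rt_def)
    show "rt k < 4"
    proof (cases "k = 0")
      case False
      then have "cos (2 * sr k) > -1" using srb[of k] k cos_monotone_0_pi[of "2 * sr k" pi]
        by auto
      then show ?thesis using False by (simp add: rt_def)
    qed (simp add: rt_def)
  next
    fix i j :: nat assume ij: "i < j" "j < q"
    show "rt i < rt j"
    proof (cases "i = 0")
      case True
      have "cos (2 * sr j) < 1" using srb[of j] ij cos_monotone_0_pi[of 0 "2 * sr j"] by auto
      then show ?thesis using True ij by (simp add: rt_def)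
    next
      case False
      have "cos (2 * sr j) < cos (2 * sr i)"
        using srb[of i] srb[of j] srm[of i j] ij False by (intro cos_monotone_0_pi) auto
      then show ?thesis using False ij by (simp add: rt_def)
    qed
  qed
qed
definition adjI :: "nat \<Rightarrow> nat \<Rightarrow> nat \<Rightarrow> bool" where
  "adjI p i j \<longleftrightarrow> i \<noteq> j \<and> ((i < p \<and> j < p) \<or> (p - 1 \<le> i \<and> p - 1 \<le> j \<and> (i = Suc j \<or> j = Suc i)))"

lemma KC_adj_idx:
  assumes p: "p \<ge> 3" and q: "q \<ge> 2" and i: "i < p + q - 1" and j: "j < p + q - 1"
  shows "KC_adj p q (int i - int p + 1) (int j - int p + 1) \<longleftrightarrow> adjI p i j"
proof
  assume "KC_adj p q (int i - int p + 1) (int j - int p + 1)"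
  then show "adjI p i j" unfolding KC_adj_def adjI_def KC_vertices_def
    by (auto simp: doubleton_eq_iff)
next
  assume a: "adjI p i j"
  have vi: "int i - int p + 1 \<in> KC_vertices p q" "int j - int p + 1 \<in> KC_vertices p q"
    using i j p q by (auto simp: KC_vertices_def)
  show "KC_adj p q (int i - int p + 1) (int j - int p + 1)"
  proof (cases "i < p \<and> j < p")
    case True then show ?thesis using vi a unfolding KC_adj_def adjI_def by auto
  next
    case False
    then have c: "p - 1 \<le> i" "p - 1 \<le> j" "i = Suc j \<or> j = Suc i" "i \<noteq> j" using a unfolding adjI_def by auto
    show ?thesis
    proof (cases "min i j = p - 1")
      case True
      then have "{int i - int p + 1, int j - int p + 1} = {0, 1}" using c p by (auto simp: doubleton_eq_iff)
      then show ?thesis using vi c unfolding KC_adj_def by auto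
    next
      case False
      define jj where "jj = int (min i j) - int p + 1"
      have "1 \<le> jj" "jj \<le> int q - 2" using False c i j p unfolding jj_def by auto
      moreover have "{int i - int p + 1, int j - int p + 1} = {jj, jj + 1}"
        using c unfolding jj_def by (auto simp: doubleton_eq_iff)
      ultimately have C: "\<exists>jj. 1 \<le> jj \<and> jj \<le> int q - 2 \<and> {int i - int p + 1, int j - int p + 1} = {jj, jj + 1}"
        by blast
      have ne: "int i - int p + 1 \<noteq> int j - int p + 1" using c by simp
      show ?thesis unfolding KC_adj_def using vi ne C by blast
    qed
  qed
qed
definition dg :: "nat \<Rightarrow> nat \<Rightarrow> nat \<Rightarrow> nat" where
  "dg p q i = (if i < p - 1 then p - 1 else if i = p - 1 then p else if i = p + q - 2 then 1 else 2)"

lemma adj_set_card: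
  assumes p: "p \<ge> 3" and q: "q \<ge> 2" and i: "i < p + q - 1"
  shows "card {j. j < p + q - 1 \<and> adjI p i j} = dg p q i"
proof -
  consider "i < p - 1" | "i = p - 1" | "p \<le> i \<and> i < p + q - 2" | "i = p + q - 2"
    using i by linarith
  then show ?thesis
  proof cases
    case 1
    then have "{j. j < p + q - 1 \<and> adjI p i j} = {0..<p} - {i}"
      using p q unfolding adjI_def by auto
    then show ?thesis using 1 by (simp add: dg_def)
  next
    case 2
    then have "{j. j < p + q - 1 \<and> adjI p i j} = insert p {0..<p - 1}"
      using p q unfolding adjI_def by auto
    then show ?thesis using 2 p by (simp add: dg_def)
  next
    case 3
    then have "{j. j < p + q - 1 \<and> adjI p i j} = {i - 1, Suc i}"
      using p q unfolding adjI_def by auto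
    moreover have "dg p q i = 2" using 3 p by (auto simp: dg_def)
    ultimately show ?thesis using 3 by simp
  next
    case 4
    then have "{j. j < p + q - 1 \<and> adjI p i j} = {i - 1}"
      using p q unfolding adjI_def by auto
    moreover have "dg p q i = 1" using 4 p q by (auto simp: dg_def)
    ultimately show ?thesis by simp
  qed
qed

lemma KC_degree_idx:
  assumes p: "p \<ge> 3" and q: "q \<ge> 2" and i: "i < p + q - 1"
  shows "KC_degree p q (int i - int p + 1) = dg p q i"
proof -
  let ?f = "\<lambda>j::nat. int j - int p + 1"
  have "{v \<in> KC_vertices p q. KC_adj p q (?f i) v} = ?f ` {j. j < p + q - 1 \<and> adjI p i j}"
  proof (intro equalityI subsetI)
    fix v assume v: "v \<in> {v \<in> KC_vertices p q. KC_adj p q (?f i) v}"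
    define j where "j = nat (v + int p - 1)"
    have vj: "v = ?f j" and jn: "j < p + q - 1" using v p q unfolding j_def KC_vertices_def by auto
    then have "adjI p i j" using v KC_adj_idx[OF p q i jn] by simp
    then show "v \<in> ?f ` {j. j < p + q - 1 \<and> adjI p i j}" using vj jn by blast
  next
    fix v assume "v \<in> ?f ` {j. j < p + q - 1 \<and> adjI p i j}"
    then obtain j where j: "v = ?f j" "j < p + q - 1" "adjI p i j" by blast
    then show "v \<in> {v \<in> KC_vertices p q. KC_adj p q (?f i) v}"
      using KC_adj_idx[OF p q i j(2)] p q unfolding KC_vertices_def by auto
  qed
  moreover have "inj_on ?f {j. j < p + q - 1 \<and> adjI p i j}" by (auto simp: inj_on_def)
  ultimately show ?thesis unfolding KC_degree_def using adj_set_card[OF p q i]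
    by (simp add: card_image)
qed

lemma L_entry:
  assumes p: "p \<ge> 3" and q: "q \<ge> 2" and i: "i < p + q - 1" and j: "j < p + q - 1"
  shows "KC_laplacian p q $$ (i, j) = (if i = j then real (dg p q i) else if adjI p i j then -1 else 0)"
  using i j KC_degree_idx[OF p q i] KC_adj_idx[OF p q i j]
  by (cases "i = j") (simp_all add: KC_laplacian_def Let_def)

lemma L_carrier: "KC_laplacian p q \<in> carrier_mat (p + q - 1) (p + q - 1)"
  by (simp add: KC_laplacian_def)
lemma adj_set1: "p \<ge> 3 \<Longrightarrow> q \<ge> 2 \<Longrightarrow> i < p - 1 \<Longrightarrow> {j. j < p + q - 1 \<and> adjI p i j} = {0..<p} - {i}"
  unfolding adjI_def by auto
lemma adj_set2: "p \<ge> 3 \<Longrightarrow> q \<ge> 2 \<Longrightarrow> i = p - 1 \<Longrightarrow> {j. j < p + q - 1 \<and> adjI p i j} = insert p ({0..<p} - {i})"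
  unfolding adjI_def by auto
lemma adj_set3: "p \<ge> 3 \<Longrightarrow> q \<ge> 2 \<Longrightarrow> p \<le> i \<Longrightarrow> i < p + q - 2 \<Longrightarrow> {j. j < p + q - 1 \<and> adjI p i j} = {i - 1, Suc i}"
  unfolding adjI_def by auto
lemma adj_set4: "p \<ge> 3 \<Longrightarrow> q \<ge> 2 \<Longrightarrow> i = p + q - 2 \<Longrightarrow> {j. j < p + q - 1 \<and> adjI p i j} = {i - 1}"
  unfolding adjI_def by auto

lemma L_mult_gen:
  assumes p: "p \<ge> 3" and q: "q \<ge> 2" and i: "i < p + q - 1"
  shows "(KC_laplacian p q *\<^sub>v vec (p + q - 1) f) $ i
     = real (dg p q i) * f i - (\<Sum>j\<in>{j. j < p + q - 1 \<and> adjI p i j}. f j)"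
proof -
  let ?n = "p + q - 1"
  have "(KC_laplacian p q *\<^sub>v vec ?n f) $ i = (\<Sum>j<?n. KC_laplacian p q $$ (i, j) * f j)"
    using i L_carrier[of p q] by (simp add: scalar_prod_def lessThan_atLeast0)
  also have "\<dots> = (\<Sum>j<?n. (if j = i then real (dg p q i) * f j else 0) - (if adjI p i j then f j else 0))"
    by (intro sum.cong refl) (auto simp: L_entry[OF p q i] adjI_def)
  also have "\<dots> = real (dg p q i) * f i - (\<Sum>j\<in>{j. j < ?n \<and> adjI p i j}. f j)"
    using i by (simp add: sum_subtractf sum.If_cases lessThan_def Collect_conj_eq Int_commute)
  finally show ?thesis .
qed

lemma L_mult:
  assumes p: "p \<ge> 3" and q: "q \<ge> 2" and i: "i < p + q - 1"
  shows "(KC_laplacian p q *\<^sub>v vec (p + q - 1) f) $ i =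
    (if i < p - 1 then real p * f i - (\<Sum>j<p. f j)
     else if i = p - 1 then real p * f i - ((\<Sum>j<p. f j) - f i) - f p
     else if i < p + q - 2 then 2 * f i - f (i - 1) - f (Suc i)
     else f i - f (i - 1))"
proof -
  consider "i < p - 1" | "i = p - 1" | "p \<le> i \<and> i < p + q - 2" | "i = p + q - 2"
    using i by linarith
  then show ?thesis
  proof cases
    case 1
    then show ?thesis unfolding L_mult_gen[OF p q i] adj_set1[OF p q 1] using p
      by (simp add: sum_diff1 dg_def lessThan_atLeast0 of_nat_diff algebra_simps)
  next
    case 2
    have "p \<notin> {0..<p} - {i}" by simp
    then show ?thesis unfolding L_mult_gen[OF p q i] adj_set2[OF p q 2] using p 2
      by (simp add: sum_diff1 dg_def lessThan_atLeast0 of_nat_diff algebra_simps)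
  next
    case 3
    then have "i - 1 \<noteq> Suc i" "\<not> i < p - 1" "i \<noteq> p - 1" "i \<noteq> p + q - 2" using p by auto
    then show ?thesis unfolding L_mult_gen[OF p q i] adj_set3[OF p q conjunct1[OF 3] conjunct2[OF 3]] using 3 p
      by (simp add: dg_def)
  next
    case 4
    then have "\<not> i < p - 1" "i \<noteq> p - 1" "\<not> i < p + q - 2" using p q by auto
    then show ?thesis unfolding L_mult_gen[OF p q i] adj_set4[OF p q 4] using 4 p
      by (simp add: dg_def)
  qed
qed
definition uf :: "nat \<Rightarrow> real \<Rightarrow> nat \<Rightarrow> real" where
  "uf p r i = (if i < p - 1 then 1 else bb (real p) r (i + 2 - p))"

definition wvf :: "nat \<Rightarrow> nat \<Rightarrow> real" where
  "wvf k i = (if i < k then 1 else if i = k then - real k else 0)"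

lemma wsum: "k < m \<Longrightarrow> (\<Sum>j<m. wvf k j) = 0"
proof (induction m)
  case 0 then show ?case by simp
next
  case (Suc m)
  show ?case
  proof (cases "k = m")
    case True
    then show ?thesis by (simp add: wvf_def)
  next
    case False
    then show ?thesis using Suc by (simp add: wvf_def)
  qed
qed

lemma usum: assumes "p \<ge> 3" shows "(\<Sum>j<p. uf p r j) = real p - r"
proof -
  have "p = Suc (p - 1)" using assms by simp
  then have "(\<Sum>j<p. uf p r j) = (\<Sum>j<p - 1. uf p r j) + uf p r (p - 1)"
    by (metis sum.lessThan_Suc)
  also have "(\<Sum>j<p - 1. uf p r j) = real (p - 1)" by (simp add: uf_def)
  also have "uf p r (p - 1) = 1 - r" using assms by (simp add: uf_def)
  finally show ?thesis using assms by (simp add: of_nat_diff)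
qed

lemma u_eigen:
  assumes p: "p \<ge> 3" and q: "q \<ge> 2" and i: "i < p + q - 1" and r: "hh (real p) q r = 0"
  shows "(KC_laplacian p q *\<^sub>v vec (p + q - 1) (uf p r)) $ i = r * uf p r i"
proof -
  consider "i < p - 1" | "i = p - 1" | "p \<le> i \<and> i < p + q - 2" | "i = p + q - 2"
    using i by linarith
  then show ?thesis
  proof cases
    case 1
    then show ?thesis unfolding L_mult[OF p q i] usum[OF p] by (simp add: uf_def)
  next
    case 2
    have u1: "uf p r (p - 1) = 1 - r" using p by (simp add: uf_def)
    have u2: "uf p r p = (2 - r) * (1 - r) - (1 + (real p - 2) * r)"
      using p by (simp add: uf_def numeral_eq_Suc)
    have "(if i < p - 1 then real p * uf p r i - (real p - r)
     else if i = p - 1 then real p * uf p r i - ((real p - r) - uf p r i) - uf p r p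
     else if i < p + q - 2 then 2 * uf p r i - uf p r (i - 1) - uf p r (Suc i)
     else uf p r i - uf p r (i - 1)) = real p * (1 - r) - ((real p - r) - (1 - r)) - ((2 - r) * (1 - r) - (1 + (real p - 2) * r))"
      using 2 p by (simp only: u1 u2 if_True if_False) simp
    also have "\<dots> = r * (1 - r)" by (simp add: algebra_simps)
    also have "\<dots> = r * uf p r i" using 2 u1 by simp
    finally show ?thesis unfolding L_mult[OF p q i] usum[OF p] .
  next
    case 3
    then obtain m where m: "i + 2 - p = Suc (Suc m)" using p by (intro that[of "i - p"]) auto
    have e1: "\<not> i < p - 1" "\<not> i - 1 < p - 1" "\<not> Suc i < p - 1" using 3 p by auto
    have e2: "i - 1 + 2 - p = Suc m" "Suc i + 2 - p = Suc (Suc (Suc m))" using 3 m p by auto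
    have a: "uf p r i = bb (real p) r (Suc (Suc m))" using e1 m unfolding uf_def by simp
    have b: "uf p r (i - 1) = bb (real p) r (Suc m)" unfolding uf_def using e1 by (simp only: e2 if_False)
    have c: "uf p r (Suc i) = bb (real p) r (Suc (Suc (Suc m)))" unfolding uf_def using e1 by (simp only: e2 if_False)
    have cond: "\<not> i < p - 1" "i \<noteq> p - 1" "i < p + q - 2" using 3 p by auto
    have "(KC_laplacian p q *\<^sub>v vec (p + q - 1) (uf p r)) $ i = 2 * uf p r i - uf p r (i - 1) - uf p r (Suc i)"
      unfolding L_mult[OF p q i] using cond by simp
    also have "\<dots> = r * uf p r i" unfolding a b c by (simp add: algebra_simps)
    finally show ?thesis .
  next
    case 4
    obtain m where m: "q = Suc m" using q by (cases q) auto
    have e1: "\<not> i < p - 1" "\<not> i - 1 < p - 1" using 4 p q by auto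
    have e2: "i + 2 - p = q" "i - 1 + 2 - p = m" using 4 p q m by auto
    have a: "uf p r i = bb (real p) r q" unfolding uf_def using e1 by (simp only: e2 if_False)
    have b: "uf p r (i - 1) = bb (real p) r m" unfolding uf_def using e1 by (simp only: e2 if_False)
    have cond: "\<not> i < p - 1" "i \<noteq> p - 1" "\<not> i < p + q - 2" using 4 p q by auto
    have h: "bb (real p) r (Suc q) = bb (real p) r q" using r by (simp add: hh_def)
    have "bb (real p) r (Suc q) = (2 - r) * bb (real p) r q - bb (real p) r m"
      using m q by (cases m) auto
    then have e: "bb (real p) r q - bb (real p) r m = r * bb (real p) r q" using h by (simp add: algebra_simps)
    have "(KC_laplacian p q *\<^sub>v vec (p + q - 1) (uf p r)) $ i = uf p r i - uf p r (i - 1)"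
      unfolding L_mult[OF p q i] using cond by simp
    also have "\<dots> = r * uf p r i" unfolding a b e ..
    finally show ?thesis .
  qed
qed

lemma w_eigen:
  assumes p: "p \<ge> 3" and q: "q \<ge> 2" and i: "i < p + q - 1" and k: "k < p - 1"
  shows "(KC_laplacian p q *\<^sub>v vec (p + q - 1) (wvf k)) $ i = real p * wvf k i"
proof -
  have s: "(\<Sum>j<p. wvf k j) = 0" using k by (intro wsum) auto
  show ?thesis unfolding L_mult[OF p q i] s using k
    by (auto simp: wvf_def)
qed
lemma L_sym: assumes p: "p \<ge> 3" and q: "q \<ge> 2"
  shows "transpose_mat (KC_laplacian p q) = KC_laplacian p q"
proof (rule eq_matI)
  fix i j assume i: "i < dim_row (KC_laplacian p q)" and j: "j < dim_col (KC_laplacian p q)"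
  then have i': "i < p + q - 1" and j': "j < p + q - 1" using L_carrier[of p q] by auto
  have "adjI p j i = adjI p i j" unfolding adjI_def by auto
  then show "transpose_mat (KC_laplacian p q) $$ (i, j) = KC_laplacian p q $$ (i, j)"
    using i j L_entry[OF p q i' j'] L_entry[OF p q j' i'] L_carrier[of p q] by auto
qed (use L_carrier[of p q] in auto)

lemma sp_vec: "vec n f \<bullet> vec n g = (\<Sum>i<n. f i * g i)"
  by (simp add: scalar_prod_def lessThan_atLeast0)

lemma eig_orth:
  fixes A :: "real mat"
  assumes A: "A \<in> carrier_mat n n" and sym: "transpose_mat A = A"
    and x: "x \<in> carrier_vec n" and y: "y \<in> carrier_vec n"
    and ex: "A *\<^sub>v x = r \<cdot>\<^sub>v x" and ey: "A *\<^sub>v y = s \<cdot>\<^sub>v y" and rs: "r \<noteq> s"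
  shows "x \<bullet> y = 0"
proof -
  have "(transpose_mat A *\<^sub>v x) \<bullet> y = x \<bullet> (A *\<^sub>v y)"
    by (rule transpose_vec_mult_scalar[OF A y x])
  then have "r * (x \<bullet> y) = s * (x \<bullet> y)" using x y unfolding sym ex ey by simp
  then show ?thesis using rs by simp
qed

lemma sumsq_pos: assumes "(j::nat) < n" "f j \<noteq> 0" shows "(\<Sum>i<n. f i * f i) > (0::real)"
proof -
  have "0 < f j * f j" using assms(2) by (metis not_real_square_gt_zero)
  then show ?thesis using assms(1) by (intro sum_pos2[of "{..<n}" j]) auto
qed

definition colf :: "nat \<Rightarrow> (nat \<Rightarrow> real) \<Rightarrow> nat \<Rightarrow> nat \<Rightarrow> real" where
  "colf p rts c i = (if c < p - 2 then wvf (Suc c) i else uf p (rts (c + 2 - p)) i)"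
definition ev :: "nat \<Rightarrow> (nat \<Rightarrow> real) \<Rightarrow> nat \<Rightarrow> real" where
  "ev p rts c = (if c < p - 2 then real p else rts (c + 2 - p))"

lemma col_eigen:
  assumes p: "p \<ge> 3" and q: "q \<ge> 2" and c: "c < p + q - 1"
    and rts: "\<And>t. t \<le> q \<Longrightarrow> hh (real p) q (rts t) = 0"
  shows "KC_laplacian p q *\<^sub>v vec (p + q - 1) (colf p rts c) = ev p rts c \<cdot>\<^sub>v vec (p + q - 1) (colf p rts c)"
proof (rule eq_vecI)
  fix i assume "i < dim_vec (ev p rts c \<cdot>\<^sub>v vec (p + q - 1) (colf p rts c))"
  then have i: "i < p + q - 1" by simp
  show "(KC_laplacian p q *\<^sub>v vec (p + q - 1) (colf p rts c)) $ i = (ev p rts c \<cdot>\<^sub>v vec (p + q - 1) (colf p rts c)) $ i"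
  proof (cases "c < p - 2")
    case True
    then have "colf p rts c = wvf (Suc c)" by (simp add: colf_def fun_eq_iff)
    then show ?thesis using w_eigen[OF p q i, of "Suc c"] True i by (simp add: ev_def)
  next
    case False
    then have "colf p rts c = uf p (rts (c + 2 - p))" by (simp add: colf_def fun_eq_iff)
    moreover have "c + 2 - p \<le> q" using c by simp
    ultimately show ?thesis using u_eigen[OF p q i rts] False i by (simp add: ev_def)
  qed
qed (use L_carrier in auto)

lemma wvf_ww: "k < l \<Longrightarrow> wvf k i * wvf l i = wvf k i"
  by (auto simp: wvf_def)
lemma wvf_wu: "k < p - 1 \<Longrightarrow> wvf k i * uf p r i = wvf k i"
  by (auto simp: wvf_def uf_def)

lemma gram_offdiag:
  assumes p: "p \<ge> 3" and q: "q \<ge> 2" and a: "a < p + q - 1" and b: "b < p + q - 1" and ab: "a \<noteq> b"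
    and rts: "\<And>t. t \<le> q \<Longrightarrow> hh (real p) q (rts t) = 0"
    and inj: "\<And>s t. s \<le> q \<Longrightarrow> t \<le> q \<Longrightarrow> rts s = rts t \<Longrightarrow> s = t"
  shows "vec (p + q - 1) (colf p rts a) \<bullet> vec (p + q - 1) (colf p rts b) = 0"
proof -
  let ?n = "p + q - 1"
  have wz: "(\<Sum>i<?n. wvf k i) = 0" if "k < p - 1" for k using that by (intro wsum) auto
  consider "a < p - 2" "b < p - 2" | "a < p - 2" "\<not> b < p - 2" | "\<not> a < p - 2" "b < p - 2"
    | "\<not> a < p - 2" "\<not> b < p - 2" by blast
  then show ?thesis
  proof cases
    case 1
    show ?thesis
    proof (cases "a < b")
      case True
      have s: "Suc a < p - 1" using 1 by simp
      then show ?thesis using 1 True wz[OF s] unfolding sp_vec colf_def by (simp add: wvf_ww)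
    next
      case False
      then have "b < a" using ab by simp
      have s: "Suc b < p - 1" using 1 by simp
      then show ?thesis using 1 \<open>b < a\<close> wz[OF s] unfolding sp_vec colf_def by (simp add: wvf_ww mult.commute[of "wvf (Suc a) _"])
    qed
  next
    case 2
    have s: "Suc a < p - 1" using 2 by simp
    then show ?thesis using 2 wz[OF s] unfolding sp_vec colf_def by (simp add: wvf_wu)
  next
    case 3
    have s: "Suc b < p - 1" using 3 by simp
    then show ?thesis using 3 wz[OF s] unfolding sp_vec colf_def by (simp add: wvf_wu mult.commute[of "uf _ _ _"])
  next
    case 4
    have x1: "a + 2 - p \<le> q" "b + 2 - p \<le> q" using a b by auto
    have x2: "a + 2 - p \<noteq> b + 2 - p" using 4 ab p by auto
    have "rts (a + 2 - p) \<noteq> rts (b + 2 - p)" using inj[OF x1] x2 by blast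
    then have ne: "ev p rts a \<noteq> ev p rts b" using 4 by (simp add: ev_def)
    show ?thesis
      by (rule eig_orth[OF L_carrier L_sym[OF p q] _ _ col_eigen[OF p q a rts] col_eigen[OF p q b rts] ne]) auto
  qed
qed

lemma gram_diag:
  assumes p: "p \<ge> 3" and q: "q \<ge> 2" and a: "a < p + q - 1"
  shows "vec (p + q - 1) (colf p rts a) \<bullet> vec (p + q - 1) (colf p rts a) > 0"
proof (cases "a < p - 2")
  case True
  have "colf p rts a (Suc a) \<noteq> 0" using True by (simp add: colf_def wvf_def)
  then show ?thesis unfolding sp_vec using True a by (intro sumsq_pos[of "Suc a"]) auto
next
  case False
  have "colf p rts a 0 \<noteq> 0" using False p by (simp add: colf_def uf_def)
  then show ?thesis unfolding sp_vec using a by (intro sumsq_pos[of 0]) auto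
qed
lemma char_poly_L:
  assumes p: "p \<ge> 3" and q: "q \<ge> 2"
    and rts: "\<And>t. t \<le> q \<Longrightarrow> hh (real p) q (rts t) = 0"
    and inj: "\<And>s t. s \<le> q \<Longrightarrow> t \<le> q \<Longrightarrow> rts s = rts t \<Longrightarrow> s = t"
  shows "char_poly (KC_laplacian p q) = (\<Prod>a \<leftarrow> map (ev p rts) [0..<p + q - 1]. [:- a, 1:])"
proof -
  define n where "n = p + q - 1"
  define L where "L = KC_laplacian p q"
  define Pm where "Pm = mat n n (\<lambda>(i, c). colf p rts c i)"
  define Dm where "Dm = mat n n (\<lambda>(i, j). if i = j then ev p rts i else 0)"
  have L: "L \<in> carrier_mat n n" unfolding L_def n_def by (rule L_carrier)
  have Pc: "Pm \<in> carrier_mat n n" unfolding Pm_def by simp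
  have Dc: "Dm \<in> carrier_mat n n" unfolding Dm_def by simp
  have colP: "col Pm c = vec n (colf p rts c)" if "c < n" for c
    using that unfolding Pm_def by (intro eq_vecI) auto
  have LP: "L * Pm = Pm * Dm"
  proof (rule eq_matI)
    fix i c assume i: "i < dim_row (Pm * Dm)" and c: "c < dim_col (Pm * Dm)"
    then have i: "i < n" and c: "c < n" using Pc Dc by auto
    have "(L * Pm) $$ (i, c) = (L *\<^sub>v col Pm c) $ i" using i c L Pc by simp
    also have "col Pm c = vec n (colf p rts c)" by (rule colP[OF c])
    also have "L *\<^sub>v vec n (colf p rts c) = ev p rts c \<cdot>\<^sub>v vec n (colf p rts c)"
      unfolding L_def n_def by (rule col_eigen[OF p q _ rts]) (use c n_def in simp)
    also have "(ev p rts c \<cdot>\<^sub>v vec n (colf p rts c)) $ i = colf p rts c i * ev p rts c"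
      using i by simp
    finally have 1: "(L * Pm) $$ (i, c) = colf p rts c i * ev p rts c" .
    have "(Pm * Dm) $$ (i, c) = (\<Sum>k\<in>{0..<n}. colf p rts k i * (if k = c then ev p rts k else 0))"
      using i c unfolding Pm_def Dm_def by (simp add: scalar_prod_def)
    also have "\<dots> = colf p rts c i * ev p rts c"
      using c by (simp add: if_distrib sum.delta cong: if_cong)
    finally show "(L * Pm) $$ (i, c) = (Pm * Dm) $$ (i, c)" using 1 by simp
  qed (use L Pc Dc in auto)
  define G where "G = transpose_mat Pm * Pm"
  have Gc: "G \<in> carrier_mat n n" unfolding G_def using Pc by simp
  have Gent: "G $$ (a, b) = vec n (colf p rts a) \<bullet> vec n (colf p rts b)" if "a < n" "b < n" for a b
  proof -
    have "G $$ (a, b) = row (transpose_mat Pm) a \<bullet> col Pm b" unfolding G_def using that Pc by simp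
    also have "row (transpose_mat Pm) a = col Pm a" using that Pc by simp
    finally show ?thesis using colP that by simp
  qed
  have Gut: "upper_triangular G"
    unfolding upper_triangular_def
  proof (intro allI impI)
    fix i j assume i: "i < dim_row G" and j: "j < i"
    then have i': "i < n" using Gc by simp
    have j': "j < n" using i' j by simp
    have "vec n (colf p rts i) \<bullet> vec n (colf p rts j) = 0"
      unfolding n_def by (rule gram_offdiag[OF p q _ _ _ rts inj]) (use i' j' j n_def in auto)
    then show "G $$ (i, j) = 0" using Gent[OF i' j'] by simp
  qed
  have "det G = prod_list (diag_mat G)" by (rule det_upper_triangular[OF Gut Gc])
  also have "\<dots> \<noteq> 0"
  proof -
    have "0 \<notin> set (diag_mat G)"
    proof
      assume "0 \<in> set (diag_mat G)"
      then obtain a where a: "a < n" "G $$ (a, a) = 0" using Gc unfolding diag_mat_def by auto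
      moreover have "G $$ (a, a) > 0" unfolding Gent[OF a(1) a(1)] using gram_diag[OF p q] a(1)
        unfolding n_def by simp
      ultimately show False by simp
    qed
    then show ?thesis by (simp add: prod_list_zero_iff)
  qed
  finally have "det G \<noteq> 0" .
  moreover have "det G = det Pm * det Pm"
  proof -
    have "det G = det (transpose_mat Pm) * det Pm" unfolding G_def
      by (rule det_mult[of _ n]) (use Pc in auto)
    also have "det (transpose_mat Pm) = det Pm" by (rule det_transpose[OF Pc])
    finally show ?thesis .
  qed
  ultimately have dP: "det Pm \<noteq> 0" by auto
  from det_non_zero_imp_unit[OF Pc dP, of "()"]
  obtain Q where Q: "Q \<in> carrier_mat n n" "Q * Pm = 1\<^sub>m n" "Pm * Q = 1\<^sub>m n"
    unfolding Units_def ring_mat_def by auto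
  have "L = L * (Pm * Q)" using L Q by simp
  also have "\<dots> = (L * Pm) * Q" using L Pc Q by simp
  also have "\<dots> = Pm * Dm * Q" unfolding LP ..
  finally have LPDQ: "L = Pm * Dm * Q" .
  have "similar_mat L Dm"
    by (rule similar_matI[of _ _ Pm Q n]) (use L Dc Pc Q LPDQ in auto)
  then have "char_poly L = char_poly Dm" by (rule char_poly_similar)
  also have "\<dots> = (\<Prod>a \<leftarrow> diag_mat Dm. [:- a, 1:])"
    by (rule char_poly_upper_triangular[OF Dc]) (simp add: upper_triangular_def Dm_def)
  also have "diag_mat Dm = map (ev p rts) [0..<n]"
    unfolding Dm_def diag_mat_def by simp
  finally show ?thesis unfolding L_def n_def .
qed
theorem proposition8:
  fixes p q :: nat
  assumes "p \<ge> 3" and "q \<ge> 2"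
  shows "\<exists>E lam M.
     spectrum_mset (KC_laplacian p q) E \<and>
     E = replicate_mset (p - 2) (real p) + {#lam#} + M \<and>
     real p < lam \<and> lam \<le> real p + 2 \<and> count E lam = 1 \<and>
     size M = q \<and> set_mset M \<subseteq> {0..4} \<and> 0 \<in># M \<and> count E 0 = 1"
proof -
  have p: "p \<ge> 3" and q: "q \<ge> 2" using assms by auto
  have P: "real p \<ge> 3" using p by simp
  obtain rt where rt0: "rt 0 = 0" and rtr: "\<And>k. k < q \<Longrightarrow> hh (real p) q (rt k) = 0 \<and> 0 \<le> rt k \<and> rt k < 4"
    and rtm: "\<And>i j. i < j \<Longrightarrow> j < q \<Longrightarrow> rt i < rt j"
    using small_roots[OF P q] by blast
  obtain lam where lam: "real p + 1 \<le> lam" "lam \<le> real p + 2" "hh (real p) q lam = 0"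
    using big_root[OF P q] by blast
  define rts where "rts t = (if t < q then rt t else lam)" for t
  have rts: "hh (real p) q (rts t) = 0" if "t \<le> q" for t
    using rtr lam unfolding rts_def by auto
  have rt_lam: "rt k < lam" if "k < q" for k using rtr[OF that] lam p by simp
  have inj: "s = t" if "s \<le> q" "t \<le> q" "rts s = rts t" for s t
  proof (rule ccontr)
    assume "s \<noteq> t"
    then consider "s < t" | "t < s" by linarith
    then show False
    proof cases
      case 1
      then show ?thesis using that rtm[OF 1] rt_lam[of s] unfolding rts_def
        by (cases "t < q") auto
    next
      case 2
      then show ?thesis using that rtm[OF 2] rt_lam[of t] unfolding rts_def
        by (cases "s < q") auto
    qed
  qed
  define n where "n = p + q - 1"
  define M where "M = mset (map rt [0..<q])"
  define E where "E = replicate_mset (p - 2) (real p) + {#lam#} + M"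
  have list: "map (ev p rts) [0..<n] = replicate (p - 2) (real p) @ map rt [0..<q] @ [lam]"
  proof (rule nth_equalityI)
    show "length (map (ev p rts) [0..<n]) = length (replicate (p - 2) (real p) @ map rt [0..<q] @ [lam])"
      unfolding n_def using p by simp
  next
    fix i assume "i < length (map (ev p rts) [0..<n])"
    then have i: "i < n" by simp
    show "map (ev p rts) [0..<n] ! i = (replicate (p - 2) (real p) @ map rt [0..<q] @ [lam]) ! i"
    proof (cases "i < p - 2")
      case True then show ?thesis using i by (simp add: ev_def nth_append)
    next
      case False
      then have "i + 2 - p = i - (p - 2)" using p by simp
      moreover have "i - (p - 2) \<le> q" using i unfolding n_def by simp
      ultimately show ?thesis using i False p
        by (cases "i - (p - 2) < q") (auto simp: ev_def nth_append rts_def n_def)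
    qed
  qed
  have spec: "spectrum_mset (KC_laplacian p q) E"
  proof -
    have "char_poly (KC_laplacian p q) = (\<Prod>a \<leftarrow> map (ev p rts) [0..<n]. [:- a, 1:])"
      unfolding n_def by (rule char_poly_L[OF p q rts inj])
    also have "\<dots> = prod_mset (image_mset (\<lambda>a. [:- a, 1:]) (mset (map (ev p rts) [0..<n])))"
      by (simp only: prod_mset_prod_list[symmetric] mset_map)
    also have "mset (map (ev p rts) [0..<n]) = E"
      unfolding list E_def M_def by (simp add: ac_simps)
    finally show ?thesis unfolding spectrum_mset_def by (simp add: image_mset.compositionality)
  qed
  have dist: "distinct (map rt [0..<q])"
  proof -
    have "inj_on rt {0..<q}"
    proof (rule inj_onI)
      fix x y assume "x \<in> {0..<q}" "y \<in> {0..<q}" "rt x = rt y"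
      then show "x = y" using rtm[of x y] rtm[of y x] by (cases x y rule: linorder_cases) auto
    qed
    then show ?thesis by (simp add: distinct_map)
  qed
  have cM: "count M a = (if a \<in> set (map rt [0..<q]) then 1 else 0)" for a
    using dist unfolding M_def distinct_count_atmost_1 by blast
  have lamM: "lam \<notin> set (map rt [0..<q])"
  proof
    assume "lam \<in> set (map rt [0..<q])"
    then obtain k where k: "k < q" "lam = rt k" by auto
    then show False using rt_lam[OF k(1)] by simp
  qed
  have zM: "(0::real) \<in> set (map rt [0..<q])" using rt0 q by force
  show ?thesis
  proof (intro exI conjI)
    show "spectrum_mset (KC_laplacian p q) E" by (rule spec)
    show "E = replicate_mset (p - 2) (real p) + {#lam#} + M" by (rule E_def)
    show "real p < lam" "lam \<le> real p + 2" using lam by auto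
    show "count E lam = 1" unfolding E_def using lam cM[of lam] lamM by simp
    show "size M = q" unfolding M_def by simp
    show "set_mset M \<subseteq> {0..4}" unfolding M_def using rtr by (auto simp: less_imp_le)
    show "0 \<in># M" unfolding M_def using zM by simp
    show "count E 0 = 1" unfolding E_def using lam p cM[of 0] zM by simp
  qed
qed

end
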